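(* Let $x\in V(T)$, let $s$ be a worst-case scenario of $T$ with respect to $x$, and let $y\in V(T)\setminus\{x\}$ be a prime broadcast center of $T$ under $s$ such that $w^{s}_{a,b}=w^{\alpha_{x,y}}_{a,b}$ for every $(a,b)\in P_{x,y}\cup E(T_{y,x})$. Let $\mu$ be the neighbour of $y$ on the $y$–$x$ path. Suppose $y$ has $h\ge1$ neighbours $u_1,\dots,u_h$ in $\bar T_{y,x}$, and let $a_1\ge a_2\ge\dots\ge a_h$ be the values $w^s_{y,u_k}+b^s(u_k,\bar T_{u_k,y})$, $1\le k\le h$, sorted in nonincreasing order. Let $\tau_0$ be the smallest index $k\in\{1,\dots,h\}$ maximizing $k\rho+a_k$. If $$w^s_{y,\mu}+b^s(\mu,T_{y,x})\ge a_{\tau_0},$$ then $\alpha_{x,y}$ is a worst-case scenario of $T$ with respect to $x$.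
   Context: $T$ is a finite tree; each edge $(u,v)$ carries an interval $[w^-_{u,v},w^+_{u,v}]$ of non-negative reals. A scenario $s$ assigns to every edge a weight $w^s_{u,v}\in[w^-_{u,v},w^+_{u,v}]$; $C$ is the set of all scenarios. A constant $\rho>0$ is fixed. Broadcast time (postal model): for a subtree $G$ of $T$ and $u\in V(G)$, $b^s(u,G)=0$ if $u$ has no neighbour in $G$; otherwise, if $v_1,\dots,v_h$ are the neighbours of $u$ in $G$ and $G_{v}$ is the component of $G-u$ containing $v$, $b^s(u,G)=\min_{\pi}\max_{1\le k\le h}\big(k\rho+w^s_{u,v_{\pi(k)}}+b^s(v_{\pi(k)},G_{v_{\pi(k)}})\big)$ over permutations $\pi$. $B^s=\{u: b^s(u,T)\le b^s(v,T)\ \forall v\}$. For distinct $x,y$, $T_{x,y}$ is the component of $T-x$ containing $y$ and $\bar T_{x,y}$ the subtree induced by $V(T)\setminus V(T_{x,y})$. $P_{x,y}$ is the set of edges of the $x$–$y$ path. A vertex $\hat\kappa\in B^s$ is a prime broadcast center under $s$ if $b^s(\hat\kappa,\bar T_{\hat\kappa,u})\ge b^s(u,\bar T_{u,\hat\kappa})$ for every neighbour $u$ of $\hat\kappa$. Regret $r^s_{x,y}=b^s(x,T)-b^s(y,T)$; $\mathrm{max\_r}(x)=\max\{r^s_{x,y}:y\in V(T),s\in C\}$; $s'$ is a worst-case scenario w.r.t. $x$ if $\mathrm{max\_r}(x)=r^{s'}_{x,y'}$ for some $y'$. Base scenario: for $v\neq x$, $\alpha_{x,v}$ has $w^{\alpha_{x,v}}_{a,b}=w^+_{a,b}$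 if $(a,b)\in P_{x,v}\cup E(\bar T_{v,x})$ and $w^-_{a,b}$ otherwise. *)

theory Defs
  imports Main "HOL-Combinatorics.Multiset_Permutations"
begin

(* Vertices have type 'a; the tree T is given by a vertex set V and a set E of
   undirected edges, each edge being a two-element set {a,b}.
   Edge weights / scenarios are functions 'a set => real (only values on E matter).
   A subtree G of T is represented by its vertex set S (subtrees of a tree are
   induced subgraphs). *)

definition adjrel :: "'a set set \<Rightarrow> 'a set \<Rightarrow> ('a \<times> 'a) set" where
  "adjrel E S = {(p,q). p \<in> S \<and> q \<in> S \<and> {p,q} \<in> E}"

definition comp :: "'a set set \<Rightarrow> 'a set \<Rightarrow> 'a \<Rightarrow> 'a \<Rightarrow> 'a set" where
  "comp E S u v = {z. (v,z) \<in> (adjrel E (S - {u}))\<^sup>*}"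

definition nbrs :: "'a set set \<Rightarrow> 'a set \<Rightarrow> 'a \<Rightarrow> 'a set" where
  "nbrs E S u = {v \<in> S. {u,v} \<in> E}"

(* broadcast time with a fuel argument n; the recursion is on the components
   G_v, whose vertex sets are strictly smaller, so fuel card S suffices.
   Permutations of the neighbours are represented by distinct lists
   enumerating them; position k (1-based) is xs!(k-1). *)
primrec bc :: "'a set set \<Rightarrow> real \<Rightarrow> ('a set \<Rightarrow> real) \<Rightarrow> nat \<Rightarrow> 'a set \<Rightarrow> 'a \<Rightarrow> real" where
  "bc E \<rho> s 0 S u = 0"
| "bc E \<rho> s (Suc n) S u =
     (if nbrs E S u = {} then 0
      else Min ((\<lambda>xs. Max ((\<lambda>k. real k * \<rho> + s {u, xs!(k-1)}
                                   + bc E \<rho> s n (comp E S u (xs!(k-1))) (xs!(k-1)))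
                          ` {1..length xs}))
                ` permutations_of_set (nbrs E S u)))"

definition bcast :: "'a set set \<Rightarrow> real \<Rightarrow> ('a set \<Rightarrow> real) \<Rightarrow> 'a set \<Rightarrow> 'a \<Rightarrow> real" where
  "bcast E \<rho> s S u = bc E \<rho> s (card S) S u"

(* finite tree: nonempty finite vertex set, edges are 2-sets of vertices,
   connected, and acyclic (every edge is a bridge, i.e. lies on no cycle) *)
definition is_tree :: "'a set \<Rightarrow> 'a set set \<Rightarrow> bool" where
  "is_tree V E \<longleftrightarrow> finite V \<and> V \<noteq> {}
     \<and> (\<forall>e\<in>E. \<exists>a b. a \<in> V \<and> b \<in> V \<and> a \<noteq> b \<and> e = {a,b})
     \<and> (\<forall>a\<in>V. \<forall>b\<in>V. (a,b) \<in> (adjrel E V)\<^sup>*)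
     \<and> (\<forall>e\<in>E. \<forall>a b. e = {a,b} \<longrightarrow> (a,b) \<notin> (adjrel (E - {e}) V)\<^sup>*)"

definition Tsub :: "'a set set \<Rightarrow> 'a set \<Rightarrow> 'a \<Rightarrow> 'a \<Rightarrow> 'a set" where
  "Tsub E V x y = comp E V x y"

definition Tbar :: "'a set set \<Rightarrow> 'a set \<Rightarrow> 'a \<Rightarrow> 'a \<Rightarrow> 'a set" where
  "Tbar E V x y = V - Tsub E V x y"

definition edges_of :: "'a set set \<Rightarrow> 'a set \<Rightarrow> 'a set set" where
  "edges_of E S = {e \<in> E. e \<subseteq> S}"

definition is_path :: "'a set set \<Rightarrow> 'a list \<Rightarrow> 'a \<Rightarrow> 'a \<Rightarrow> bool" where
  "is_path E p x y \<longleftrightarrow> p \<noteq> [] \<and> hd p = x \<and> last p = y \<and> distinct p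
     \<and> (\<forall>i. Suc i < length p \<longrightarrow> {p!i, p!Suc i} \<in> E)"

definition path_edges :: "'a set set \<Rightarrow> 'a \<Rightarrow> 'a \<Rightarrow> 'a set set" where
  "path_edges E x y = {{p!i, p!Suc i} | p i. is_path E p x y \<and> Suc i < length p}"

definition scenario :: "'a set set \<Rightarrow> ('a set \<Rightarrow> real) \<Rightarrow> ('a set \<Rightarrow> real) \<Rightarrow> ('a set \<Rightarrow> real) \<Rightarrow> bool" where
  "scenario E wl wu s \<longleftrightarrow> (\<forall>e\<in>E. wl e \<le> s e \<and> s e \<le> wu e)"

definition regret :: "'a set set \<Rightarrow> real \<Rightarrow> 'a set \<Rightarrow> ('a set \<Rightarrow> real) \<Rightarrow> 'a \<Rightarrow> 'a \<Rightarrow> real" where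
  "regret E \<rho> V s x y = bcast E \<rho> s V x - bcast E \<rho> s V y"

definition max_r :: "'a set set \<Rightarrow> real \<Rightarrow> 'a set \<Rightarrow> ('a set \<Rightarrow> real) \<Rightarrow> ('a set \<Rightarrow> real) \<Rightarrow> 'a \<Rightarrow> real" where
  "max_r E \<rho> V wl wu x = Sup {regret E \<rho> V s x y | s y. y \<in> V \<and> scenario E wl wu s}"

definition worst_case :: "'a set set \<Rightarrow> real \<Rightarrow> 'a set \<Rightarrow> ('a set \<Rightarrow> real) \<Rightarrow> ('a set \<Rightarrow> real) \<Rightarrow> ('a set \<Rightarrow> real) \<Rightarrow> 'a \<Rightarrow> bool" where
  "worst_case E \<rho> V wl wu s x \<longleftrightarrow> scenario E wl wu s
     \<and> (\<exists>y\<in>V. max_r E \<rho> V wl wu x = regret E \<rho> V s x y)"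

definition alpha :: "'a set set \<Rightarrow> 'a set \<Rightarrow> ('a set \<Rightarrow> real) \<Rightarrow> ('a set \<Rightarrow> real) \<Rightarrow> 'a \<Rightarrow> 'a \<Rightarrow> 'a set \<Rightarrow> real" where
  "alpha E V wl wu x v = (\<lambda>e. if e \<in> path_edges E x v \<union> edges_of E (Tbar E V v x) then wu e else wl e)"

definition in_B :: "'a set set \<Rightarrow> real \<Rightarrow> 'a set \<Rightarrow> ('a set \<Rightarrow> real) \<Rightarrow> 'a \<Rightarrow> bool" where
  "in_B E \<rho> V s k \<longleftrightarrow> k \<in> V \<and> (\<forall>v\<in>V. bcast E \<rho> s V k \<le> bcast E \<rho> s V v)"

definition prime_bc :: "'a set set \<Rightarrow> real \<Rightarrow> 'a set \<Rightarrow> ('a set \<Rightarrow> real) \<Rightarrow> 'a \<Rightarrow> bool" where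
  "prime_bc E \<rho> V s k \<longleftrightarrow> in_B E \<rho> V s k
     \<and> (\<forall>u\<in>nbrs E V k. bcast E \<rho> s (Tbar E V k u) k \<ge> bcast E \<rho> s (Tbar E V u k) u)"

end

theory Submission
  imports Defs
begin


fun R :: "real \<Rightarrow> ('a \<Rightarrow> real) \<Rightarrow> 'a list \<Rightarrow> real" where
  "R \<rho> f [] = 0"
| "R \<rho> f (v#xs) = \<rho> + max (f v) (R \<rho> f xs)"

lemma R_ge: "k \<in> {1..length xs} \<Longrightarrow> real k * \<rho> + f (xs!(k-1)) \<le> R \<rho> f xs"
proof (induction xs arbitrary: k)
  case Nil then show ?case by simp
next
  case (Cons v xs)
  show ?case
  proof (cases "k = 1")
    case True then show ?thesis by simp
  next
    case False
    then obtain k' where k: "k = Suc k'" "k' \<in> {1..length xs}" using Cons.prems by (cases k) auto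
    have "real k' * \<rho> + f (xs!(k'-1)) \<le> R \<rho> f xs" using Cons.IH k by blast
    moreover have "xs!(k'-1) = (v#xs)!(k-1)" using k by (cases k') auto
    moreover have "real k * \<rho> = \<rho> + real k' * \<rho>" using k by (simp add: distrib_right)
    moreover have "R \<rho> f xs \<le> max (f v) (R \<rho> f xs)" by simp
    ultimately show ?thesis by simp
  qed
qed

lemma R_attained: "xs \<noteq> [] \<Longrightarrow> \<forall>z\<in>set xs. 0 \<le> f z \<Longrightarrow> \<exists>k\<in>{1..length xs}. R \<rho> f xs \<le> real k * \<rho> + f (xs!(k-1))"
proof (induction xs)
  case Nil then show ?case by simp
next
  case (Cons v xs)
  show ?case
  proof (cases "R \<rho> f xs \<le> f v")
    case True then show ?thesis by (intro bexI[of _ 1]) auto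
  next
    case False
    then have "xs \<noteq> []" using Cons.prems by auto
    then obtain k where k: "k\<in>{1..length xs}" "R \<rho> f xs \<le> real k * \<rho> + f (xs!(k-1))"
      using Cons by auto
    then show ?thesis using False
      by (intro bexI[of _ "Suc k"]) (auto simp: algebra_simps)
  qed
qed

lemma Max_eq_R:
  assumes "xs \<noteq> []" "\<forall>z\<in>set xs. 0 \<le> f z"
  shows "Max ((\<lambda>k. real k * \<rho> + f (xs!(k-1))) ` {1..length xs}) = R \<rho> f xs"
proof (rule antisym)
  show "Max ((\<lambda>k. real k * \<rho> + f (xs!(k-1))) ` {1..length xs}) \<le> R \<rho> f xs"
  proof (subst Max_le_iff)
    show "finite ((\<lambda>k. real k * \<rho> + f (xs!(k-1))) ` {1..length xs})" by simp
    show "(\<lambda>k. real k * \<rho> + f (xs!(k-1))) ` {1..length xs} \<noteq> {}" using assms(1) by (simp add: Suc_le_eq)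
    show "\<forall>a\<in>(\<lambda>k. real k * \<rho> + f (xs!(k-1))) ` {1..length xs}. a \<le> R \<rho> f xs"
      using R_ge by blast
  qed
  obtain k where "k\<in>{1..length xs}" "R \<rho> f xs \<le> real k * \<rho> + f (xs!(k-1))"
    using R_attained assms by blast
  then show "R \<rho> f xs \<le> Max ((\<lambda>k. real k * \<rho> + f (xs!(k-1))) ` {1..length xs})"
    by (meson Max_ge finite_atLeastAtMost finite_imageI image_eqI order_trans)
qed

lemma R_filter: "0 \<le> \<rho> \<Longrightarrow> R \<rho> f (filter P xs) \<le> R \<rho> f xs"
  by (induction xs) (auto simp: max_def)

lemma R_pigeon:
  assumes "0 \<le> \<rho>" "W \<subseteq> set xs" "finite W" "card W = Suc m" "\<forall>w\<in>W. t \<le> f w"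
  shows "real (Suc m) * \<rho> + t \<le> R \<rho> f xs"
  using assms
proof (induction xs arbitrary: W m)
  case Nil then show ?case by auto
next
  case (Cons v xs)
  show ?case
  proof (cases "v \<in> W")
    case False
    then have "W \<subseteq> set xs" using Cons.prems by auto
    then have "real (Suc m) * \<rho> + t \<le> R \<rho> f xs" using Cons by blast
    then show ?thesis using Cons.prems by (simp add: max_def)
  next
    case True
    show ?thesis
    proof (cases m)
      case 0
      have "t \<le> f v" using True Cons.prems by blast
      then show ?thesis using 0 by (simp add: max_def)
    next
      case (Suc m')
      have "W - {v} \<subseteq> set xs" "card (W - {v}) = Suc m'" using Cons.prems True Suc by auto
      then have "real (Suc m') * \<rho> + t \<le> R \<rho> f xs" using Cons.IH[of "W - {v}" m'] Cons.prems by auto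
      then show ?thesis using Suc by (simp add: max_def algebra_simps)
    qed
  qed
qed

lemma R_le:
  assumes "0 \<le> \<rho>" "xs \<noteq> []" "\<forall>i<length xs. real (Suc i) * \<rho> + f (xs!i) \<le> t" "\<forall>z\<in>set xs. 0 \<le> f z"
  shows "R \<rho> f xs \<le> t"
  using assms
proof (induction xs arbitrary: t)
  case Nil then show ?case by simp
next
  case (Cons v xs)
  show ?case
  proof (cases "xs = []")
    case True then show ?thesis using Cons.prems by (auto simp: max_def)
  next
    case False
    have "\<forall>i<length xs. real (Suc i) * \<rho> + f (xs!i) \<le> t - \<rho>"
    proof (intro allI impI)
      fix i assume "i < length xs"
      then have "real (Suc (Suc i)) * \<rho> + f ((v#xs)!(Suc i)) \<le> t" using Cons.prems(3) by auto
      then show "real (Suc i) * \<rho> + f (xs!i) \<le> t - \<rho>" by (simp add: algebra_simps)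
    qed
    then have "R \<rho> f xs \<le> t - \<rho>" using Cons False by auto
    moreover have "\<rho> + f v \<le> t" using Cons.prems(3)[rule_format, of 0] by simp
    ultimately show ?thesis by simp
  qed
qed

lemma R_cong: "\<forall>z\<in>set xs. f z = g z \<Longrightarrow> R \<rho> f xs = R \<rho> g xs"
  by (induction xs) auto



lemma adjrel_sym: "(a,b) \<in> adjrel E S \<Longrightarrow> (b,a) \<in> adjrel E S"
  by (auto simp: adjrel_def insert_commute)

lemma adjrel_rtrancl_sym: "(a,b) \<in> (adjrel E S)\<^sup>* \<Longrightarrow> (b,a) \<in> (adjrel E S)\<^sup>*"
proof (induction rule: rtrancl_induct)
  case base then show ?case by simp
next
  case (step y z)
  then show ?case by (meson adjrel_sym converse_rtrancl_into_rtrancl)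
qed

lemma cp_sub: "comp E S u v \<subseteq> insert v (S - {u})"
proof
  fix z assume "z \<in> comp E S u v"
  then have "(v,z) \<in> (adjrel E (S - {u}))\<^sup>*" by (simp add: Defs.comp_def)
  then show "z \<in> insert v (S - {u})"
    by (induction rule: rtrancl_induct) (auto simp: adjrel_def)
qed

lemma cp_self: "v \<in> comp E S u v" by (simp add: Defs.comp_def)

lemma cp_sub2: "v \<in> S \<Longrightarrow> v \<noteq> u \<Longrightarrow> comp E S u v \<subseteq> S - {u}"
  using cp_sub by fastforce

lemma cp_same: "z \<in> comp E S u v \<Longrightarrow> comp E S u z = comp E S u v"
  unfolding Defs.comp_def
  by (auto intro: rtrancl_trans adjrel_rtrancl_sym)

lemma cp_mono: "S' \<subseteq> S \<Longrightarrow> comp E S' u v \<subseteq> comp E S u v"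
proof -
  assume "S' \<subseteq> S"
  then have "adjrel E (S' - {u}) \<subseteq> adjrel E (S - {u})" by (auto simp: adjrel_def)
  then have "(adjrel E (S' - {u}))\<^sup>* \<subseteq> (adjrel E (S - {u}))\<^sup>*" by (rule rtrancl_mono)
  then show ?thesis unfolding Defs.comp_def
    apply -
    apply (rule subsetI)
    apply (simp only: mem_Collect_eq)
    by (rule subsetD)
qed

lemma cp_restrict:
  assumes "S' \<subseteq> S" "comp E S u v \<subseteq> S'"
  shows "comp E S' u v = comp E S u v"
proof
  show "comp E S' u v \<subseteq> comp E S u v" by (rule cp_mono[OF assms(1)])
  show "comp E S u v \<subseteq> comp E S' u v"
  proof
    fix z assume "z \<in> comp E S u v"
    then have "(v,z) \<in> (adjrel E (S - {u}))\<^sup>*" by (simp add: Defs.comp_def)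
    then have "(v,z) \<in> (adjrel E (S' - {u}))\<^sup>*"
    proof (induction rule: rtrancl_induct)
      case base then show ?case by (rule rtrancl_refl)
    next
      case (step y z)
      have "(v,z) \<in> (adjrel E (S - {u}))\<^sup>*" by (rule rtrancl_into_rtrancl[OF step(1,2)])
      then have "z \<in> comp E S u v" by (simp add: Defs.comp_def)
      moreover have "y \<in> comp E S u v" using step(1) by (simp add: Defs.comp_def)
      ultimately have "y \<in> S'" "z \<in> S'" using assms(2) by (simp_all add: subset_iff)
      then have "(y,z) \<in> adjrel E (S' - {u})" using step(2) by (simp add: adjrel_def)
      then show ?case by (rule rtrancl_into_rtrancl[OF step(3)])
    qed
    then show "z \<in> comp E S' u v" by (simp add: Defs.comp_def)
  qed
qed

lemma nbrs_sub: "nbrs E S u \<subseteq> S" by (auto simp: nbrs_def)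

lemma cp_finite: "finite S \<Longrightarrow> finite (comp E S u v)"
  by (rule finite_subset[OF cp_sub]) simp

lemma nbrs_finite: "finite S \<Longrightarrow> finite (nbrs E S u)"
  by (rule finite_subset[OF nbrs_sub])

lemma perm_nth: "xs \<in> permutations_of_set N \<Longrightarrow> k \<in> {1..length xs} \<Longrightarrow> xs!(k-1) \<in> N"
  unfolding permutations_of_set_def by auto

lemma perm_ne: "xs \<in> permutations_of_set N \<Longrightarrow> N \<noteq> {} \<Longrightarrow> xs \<noteq> []"
  unfolding permutations_of_set_def by auto

lemma bc_nonneg:
  assumes "\<forall>e\<in>E. 0 \<le> s e" "0 \<le> \<rho>" "finite S"
  shows "0 \<le> bc E \<rho> s n S u"
  using assms(3)
proof (induction n arbitrary: S u)
  case 0 then show ?case by simp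
next
  case (Suc n)
  let ?N = "nbrs E S u"
  show ?case
  proof (cases "?N = {}")
    case True then show ?thesis by simp
  next
    case False
    have fN: "finite ?N" using Suc.prems by (rule nbrs_finite)
    have "\<forall>xs\<in>permutations_of_set ?N. 0 \<le> Max ((\<lambda>k. real k * \<rho> + s {u, xs!(k-1)}
                                   + bc E \<rho> s n (comp E S u (xs!(k-1))) (xs!(k-1)))
                          ` {1..length xs})"
    proof
      fix xs assume xs: "xs \<in> permutations_of_set ?N"
      then have "xs \<noteq> []" using False by (rule perm_ne)
      then have "xs!(1-1) \<in> ?N" using xs by (intro perm_nth) (auto simp: Suc_le_eq)
      then have e: "{u, xs!0} \<in> E" by (simp add: nbrs_def)
      have fc: "finite (comp E S u (xs!0))" using Suc.prems by (rule cp_finite)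
      have "0 \<le> real 1 * \<rho> + s {u, xs!(1-1)} + bc E \<rho> s n (comp E S u (xs!(1-1))) (xs!(1-1))"
        using assms e Suc.IH[OF fc] by simp
      also have "\<dots> \<le> Max ((\<lambda>k. real k * \<rho> + s {u, xs!(k-1)}
                                   + bc E \<rho> s n (comp E S u (xs!(k-1))) (xs!(k-1)))
                          ` {1..length xs})"
        using \<open>xs \<noteq> []\<close> by (intro Max_ge finite_imageI finite_atLeastAtMost image_eqI[where x=1]) (auto simp: Suc_le_eq)
      finally show "0 \<le> Max ((\<lambda>k. real k * \<rho> + s {u, xs!(k-1)}
                                   + bc E \<rho> s n (comp E S u (xs!(k-1))) (xs!(k-1)))
                          ` {1..length xs})" .
    qed
    then show ?thesis using False fN by (simp add: Min_ge_iff)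
  qed
qed

lemma Min_img_mono: "finite A \<Longrightarrow> A \<noteq> {} \<Longrightarrow> (\<And>x. x \<in> A \<Longrightarrow> f x \<le> g x) \<Longrightarrow> Min (f ` A) \<le> Min (g ` A)"
proof -
  assume a: "finite A" "A \<noteq> {}" "\<And>x. x \<in> A \<Longrightarrow> f x \<le> g x"
  have "Min (g ` A) \<in> g ` A" using a by (intro Min_in) auto
  then obtain x where x: "x \<in> A" "Min (g ` A) = g x" by auto
  have "Min (f ` A) \<le> f x" using a x by (intro Min_le) auto
  also have "\<dots> \<le> g x" using a x by auto
  finally show ?thesis using x by simp
qed

lemma Max_img_mono: "finite A \<Longrightarrow> A \<noteq> {} \<Longrightarrow> (\<And>x. x \<in> A \<Longrightarrow> f x \<le> g x) \<Longrightarrow> Max (f ` A) \<le> Max (g ` A)"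
proof -
  assume a: "finite A" "A \<noteq> {}" "\<And>x. x \<in> A \<Longrightarrow> f x \<le> g x"
  have "Max (f ` A) \<in> f ` A" using a by (intro Max_in) auto
  then obtain x where x: "x \<in> A" "Max (f ` A) = f x" by auto
  have "f x \<le> g x" using a x by auto
  also have "g x \<le> Max (g ` A)" using a x by (intro Max_ge) auto
  finally show ?thesis using x by simp
qed

lemma bc_mono:
  assumes "\<forall>e\<in>E. s1 e \<le> s2 e" "finite S"
  shows "bc E \<rho> s1 n S u \<le> bc E \<rho> s2 n S u"
  using assms(2)
proof (induction n arbitrary: S u)
  case 0 then show ?case by simp
next
  case (Suc n)
  let ?N = "nbrs E S u"
  show ?case
  proof (cases "?N = {}")
    case True then show ?thesis by simp
  next
    case False
    have fN: "finite ?N" using Suc.prems by (rule nbrs_finite)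
    let ?h = "\<lambda>s xs k. real k * \<rho> + s {u, xs!(k-1)} + bc E \<rho> s n (comp E S u (xs!(k-1))) (xs!(k-1))"
    have step: "?h s1 xs k \<le> ?h s2 xs k" if xs: "xs \<in> permutations_of_set ?N" and k: "k \<in> {1..length xs}" for xs k
    proof -
      have "xs!(k-1) \<in> ?N" using xs k by (rule perm_nth)
      then have e: "{u, xs!(k-1)} \<in> E" by (simp add: nbrs_def)
      have fc: "finite (comp E S u (xs!(k-1)))" using Suc.prems by (rule cp_finite)
      show ?thesis using assms(1) e Suc.IH[OF fc] by (meson add_mono add_left_mono)
    qed
    have "Min ((\<lambda>xs. Max (?h s1 xs ` {1..length xs})) ` permutations_of_set ?N)
        \<le> Min ((\<lambda>xs. Max (?h s2 xs ` {1..length xs})) ` permutations_of_set ?N)"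
    proof (rule Min_img_mono)
      show "finite (permutations_of_set ?N)" by simp
      show "permutations_of_set ?N \<noteq> {}" using fN by simp
      fix xs assume xs: "xs \<in> permutations_of_set ?N"
      show "Max (?h s1 xs ` {1..length xs}) \<le> Max (?h s2 xs ` {1..length xs})"
      proof (rule Max_img_mono)
        show "finite {1..length xs}" by simp
        show "{1..length xs} \<noteq> {}" using perm_ne[OF xs False] by (simp add: Suc_le_eq)
        fix k assume "k \<in> {1..length xs}"
        then show "?h s1 xs k \<le> ?h s2 xs k" using xs step by blast
      qed
    qed
    then show ?thesis using False by simp
  qed
qed

lemma bc_local:
  assumes "\<forall>e\<in>edges_of E S. s1 e = s2 e" "u \<in> S"
  shows "bc E \<rho> s1 n S u = bc E \<rho> s2 n S u"
  using assms
proof (induction n arbitrary: S u)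
  case 0 then show ?case by simp
next
  case (Suc n)
  let ?N = "nbrs E S u"
  let ?h = "\<lambda>s xs k. real k * \<rho> + s {u, xs!(k-1)} + bc E \<rho> s n (comp E S u (xs!(k-1))) (xs!(k-1))"
  have step: "?h s1 xs k = ?h s2 xs k" if xs: "xs \<in> permutations_of_set ?N" and k: "k \<in> {1..length xs}" for xs k
  proof -
    have v: "xs!(k-1) \<in> ?N" using xs k by (rule perm_nth)
    then have e: "{u, xs!(k-1)} \<in> edges_of E S" using Suc.prems by (simp add: nbrs_def edges_of_def)
    have "xs!(k-1) \<in> S" by (rule subsetD[OF nbrs_sub v])
    then have sub: "comp E S u (xs!(k-1)) \<subseteq> S" using cp_sub[of E S u "xs!(k-1)"] by blast
    then have ed: "\<forall>e\<in>edges_of E (comp E S u (xs!(k-1))). s1 e = s2 e"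
      using Suc.prems by (auto simp: edges_of_def)
    have "bc E \<rho> s1 n (comp E S u (xs!(k-1))) (xs!(k-1)) = bc E \<rho> s2 n (comp E S u (xs!(k-1))) (xs!(k-1))"
      by (rule Suc.IH[OF ed cp_self])
    moreover have "s1 {u, xs!(k-1)} = s2 {u, xs!(k-1)}" using e Suc.prems(1) by blast
    ultimately show ?thesis by simp
  qed
  have "Min ((\<lambda>xs. Max (?h s1 xs ` {1..length xs})) ` permutations_of_set ?N)
        = Min ((\<lambda>xs. Max (?h s2 xs ` {1..length xs})) ` permutations_of_set ?N)"
    using step by (intro arg_cong[where f=Min] image_cong refl arg_cong[where f=Max]) blast
  then show ?case by simp
qed



lemma cp_card:
  assumes "finite S" "u \<in> S" "v \<in> S" "v \<noteq> u"
  shows "card (comp E S u v) < card S"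
proof -
  have "comp E S u v \<subseteq> S - {u}" by (rule cp_sub2[OF assms(3,4)])
  then have "comp E S u v \<subset> S" using assms by blast
  then show ?thesis using assms(1) psubset_card_mono by blast
qed


lemma nbrs_noloop: "\<forall>a. {a} \<notin> E \<Longrightarrow> v \<in> nbrs E S u \<Longrightarrow> v \<noteq> u"
  by (auto simp: nbrs_def)

lemma bc_fuel:
  assumes "finite S" "u \<in> S" "card S \<le> n" "card S \<le> m" "\<forall>a. {a} \<notin> E"
  shows "bc E \<rho> s n S u = bc E \<rho> s m S u"
  using assms
proof (induction n arbitrary: S u m)
  case 0
  then have "card S > 0" using card_gt_0_iff by blast
  then show ?case using 0 by simp
next
  case (Suc n)
  have "card S > 0" using Suc.prems card_gt_0_iff by blast
  then obtain m' where m: "m = Suc m'" using Suc.prems by (cases m) auto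
  let ?N = "nbrs E S u"
  let ?h = "\<lambda>n xs k. real k * \<rho> + s {u, xs!(k-1)} + bc E \<rho> s n (comp E S u (xs!(k-1))) (xs!(k-1))"
  have step: "?h n xs k = ?h m' xs k" if xs: "xs \<in> permutations_of_set ?N" and k: "k \<in> {1..length xs}" for xs k
  proof -
    have v: "xs!(k-1) \<in> ?N" using xs k by (rule perm_nth)
    have a1: "xs!(k-1) \<noteq> u" using Suc.prems(5) v by (rule nbrs_noloop)
    have a2: "xs!(k-1) \<in> S" by (rule subsetD[OF nbrs_sub v])
    have "card (comp E S u (xs!(k-1))) < card S" by (rule cp_card[OF Suc.prems(1,2) a2 a1])
    then have c1: "card (comp E S u (xs!(k-1))) \<le> n" "card (comp E S u (xs!(k-1))) \<le> m'"
      using Suc.prems m by auto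
    have "bc E \<rho> s n (comp E S u (xs!(k-1))) (xs!(k-1)) = bc E \<rho> s m' (comp E S u (xs!(k-1))) (xs!(k-1))"
      by (rule Suc.IH[OF cp_finite[OF Suc.prems(1)] cp_self c1 Suc.prems(5)])
    then show ?thesis by simp
  qed
  have "Min ((\<lambda>xs. Max (?h n xs ` {1..length xs})) ` permutations_of_set ?N)
        = Min ((\<lambda>xs. Max (?h m' xs ` {1..length xs})) ` permutations_of_set ?N)"
  proof (rule arg_cong[where f=Min], rule image_cong[OF refl])
    fix xs assume xs: "xs \<in> permutations_of_set ?N"
    have "?h n xs ` {1..length xs} = ?h m' xs ` {1..length xs}"
      by (rule image_cong[OF refl step[OF xs]])
    then show "Max (?h n xs ` {1..length xs}) = Max (?h m' xs ` {1..length xs})" by (rule arg_cong[where f=Max])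
  qed
  then show ?case unfolding m bc.simps(2) by (simp only:)
qed

lemma bcast_nonneg: "\<forall>e\<in>E. 0 \<le> s e \<Longrightarrow> 0 \<le> \<rho> \<Longrightarrow> finite S \<Longrightarrow> 0 \<le> bcast E \<rho> s S u"
  unfolding bcast_def by (rule bc_nonneg)

lemma bcast_eq:
  assumes "finite S" "u \<in> S" "\<forall>a. {a} \<notin> E" "\<forall>e\<in>E. 0 \<le> s e" "0 \<le> \<rho>"
  shows "bcast E \<rho> s S u = (if nbrs E S u = {} then 0 else
     Min ((R \<rho> (\<lambda>v. s {u,v} + bcast E \<rho> s (comp E S u v) v)) ` permutations_of_set (nbrs E S u)))"
proof -
  have "card S > 0" using assms card_gt_0_iff by blast
  then obtain n where n: "card S = Suc n" by (cases "card S") auto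
  let ?N = "nbrs E S u"
  let ?f = "\<lambda>v. s {u,v} + bcast E \<rho> s (comp E S u v) v"
  let ?g = "\<lambda>xs. Max ((\<lambda>k. real k * \<rho> + s {u, xs!(k-1)}
                                   + bc E \<rho> s n (comp E S u (xs!(k-1))) (xs!(k-1)))
                          ` {1..length xs})"
  have key: "?g xs = R \<rho> ?f xs" if xs: "xs \<in> permutations_of_set ?N" and ne: "?N \<noteq> {}" for xs
  proof -
    have eq: "real k * \<rho> + s {u, xs!(k-1)}
                                   + bc E \<rho> s n (comp E S u (xs!(k-1))) (xs!(k-1))
          = real k * \<rho> + ?f (xs!(k-1))" if k: "k \<in> {1..length xs}" for k
    proof -
      have v: "xs!(k-1) \<in> ?N" using xs k by (auto simp: permutations_of_set_def)
      have a1: "xs!(k-1) \<noteq> u" using assms(3) v by (rule nbrs_noloop)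
      have a2: "xs!(k-1) \<in> S" by (rule subsetD[OF nbrs_sub v])
      have "card (comp E S u (xs!(k-1))) < card S" by (rule cp_card[OF assms(1,2) a2 a1])
      then have c: "card (comp E S u (xs!(k-1))) \<le> n" using n by simp
      have "bc E \<rho> s n (comp E S u (xs!(k-1))) (xs!(k-1)) = bc E \<rho> s (card (comp E S u (xs!(k-1)))) (comp E S u (xs!(k-1))) (xs!(k-1))"
        by (rule bc_fuel[OF cp_finite[OF assms(1)] cp_self c order.refl assms(3)])
      then show ?thesis unfolding bcast_def by simp
    qed
    have img: "(\<lambda>k. real k * \<rho> + s {u, xs!(k-1)}
                                   + bc E \<rho> s n (comp E S u (xs!(k-1))) (xs!(k-1))) ` {1..length xs}
       = (\<lambda>k. real k * \<rho> + ?f (xs!(k-1))) ` {1..length xs}"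
      by (rule image_cong[OF refl eq])
    have "xs \<noteq> []" using xs ne by (auto simp: permutations_of_set_def)
    moreover have "\<forall>z\<in>set xs. 0 \<le> ?f z"
    proof
      fix z assume "z \<in> set xs"
      then have "z \<in> ?N" using xs by (auto simp: permutations_of_set_def)
      then have "{u,z} \<in> E" by (simp add: nbrs_def)
      then have "0 \<le> s {u,z}" using assms by blast
      moreover have "0 \<le> bcast E \<rho> s (comp E S u z) z" by (rule bcast_nonneg[OF assms(4,5) cp_finite[OF assms(1)]])
      ultimately show "0 \<le> ?f z" by simp
    qed
    ultimately have "Max ((\<lambda>k. real k * \<rho> + ?f (xs!(k-1))) ` {1..length xs}) = R \<rho> ?f xs"
      by (rule Max_eq_R)
    then show ?thesis using img by simp
  qed
  have "bcast E \<rho> s S u = bc E \<rho> s (Suc n) S u" unfolding bcast_def n ..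
  also have "\<dots> = (if ?N = {} then 0 else Min (?g ` permutations_of_set ?N))" by simp
  also have "\<dots> = (if ?N = {} then 0 else Min (R \<rho> ?f ` permutations_of_set ?N))"
    using key by (auto intro!: arg_cong[where f=Min] image_cong)
  finally show ?thesis .
qed



definition fv :: "'a set set \<Rightarrow> real \<Rightarrow> ('a set \<Rightarrow> real) \<Rightarrow> 'a set \<Rightarrow> 'a \<Rightarrow> 'a \<Rightarrow> real" where
  "fv E \<rho> s S u v = s {u,v} + bcast E \<rho> s (comp E S u v) v"

lemma bcast_eq2:
  assumes "finite S" "u \<in> S" "\<forall>a. {a} \<notin> E" "\<forall>e\<in>E. 0 \<le> s e" "0 \<le> \<rho>" "nbrs E S u \<noteq> {}"
  shows "bcast E \<rho> s S u = Min (R \<rho> (fv E \<rho> s S u) ` permutations_of_set (nbrs E S u))"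
  using bcast_eq[OF assms(1-5)] assms(6) unfolding fv_def by simp

lemma bcast_upper:
  assumes "finite S" "u \<in> S" "\<forall>a. {a} \<notin> E" "\<forall>e\<in>E. 0 \<le> s e" "0 \<le> \<rho>"
    and xs: "xs \<in> permutations_of_set (nbrs E S u)" and ne: "nbrs E S u \<noteq> {}"
  shows "bcast E \<rho> s S u \<le> R \<rho> (fv E \<rho> s S u) xs"
proof -
  have "Min (R \<rho> (fv E \<rho> s S u) ` permutations_of_set (nbrs E S u)) \<le> R \<rho> (fv E \<rho> s S u) xs"
    by (rule Min_le[OF finite_imageI[OF finite_permutations_of_set] imageI[OF xs]])
  then show ?thesis using bcast_eq2[OF assms(1-5) ne] by simp
qed

lemma bcast_attained:
  assumes "finite S" "u \<in> S" "\<forall>a. {a} \<notin> E" "\<forall>e\<in>E. 0 \<le> s e" "0 \<le> \<rho>"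
    and ne: "nbrs E S u \<noteq> {}"
  shows "\<exists>xs\<in>permutations_of_set (nbrs E S u). bcast E \<rho> s S u = R \<rho> (fv E \<rho> s S u) xs"
proof -
  have fin: "finite (nbrs E S u)" by (rule nbrs_finite[OF assms(1)])
  have "Min (R \<rho> (fv E \<rho> s S u) ` permutations_of_set (nbrs E S u)) \<in> R \<rho> (fv E \<rho> s S u) ` permutations_of_set (nbrs E S u)"
    by (rule Min_in) (simp_all add: fin)
  then show ?thesis using bcast_eq2[OF assms(1-5) ne] by auto
qed

lemma bcast_pigeon:
  assumes "finite S" "u \<in> S" "\<forall>a. {a} \<notin> E" "\<forall>e\<in>E. 0 \<le> s e" "0 \<le> \<rho>"
    and W: "W \<subseteq> nbrs E S u" "card W = Suc m" "\<forall>w\<in>W. t \<le> fv E \<rho> s S u w"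
  shows "real (Suc m) * \<rho> + t \<le> bcast E \<rho> s S u"
proof -
  have fin: "finite (nbrs E S u)" by (rule nbrs_finite[OF assms(1)])
  have finW: "finite W" by (rule finite_subset[OF W(1) fin])
  have "W \<noteq> {}" using W(2) by auto
  then have ne: "nbrs E S u \<noteq> {}" using W(1) by auto
  obtain xs where xs: "xs \<in> permutations_of_set (nbrs E S u)" "bcast E \<rho> s S u = R \<rho> (fv E \<rho> s S u) xs"
    using bcast_attained[OF assms(1-5) ne] by blast
  have "W \<subseteq> set xs" using xs(1) W(1) by (simp add: permutations_of_set_def)
  then have "real (Suc m) * \<rho> + t \<le> R \<rho> (fv E \<rho> s S u) xs"
    by (rule R_pigeon[OF assms(5) _ finW W(2,3)])
  then show ?thesis using xs(2) by simp
qed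

lemma bcast_G1:
  assumes "finite S" "u \<in> S" "\<forall>a. {a} \<notin> E" "\<forall>e\<in>E. 0 \<le> s e" "0 \<le> \<rho>"
    and v: "v \<in> nbrs E S u"
  shows "\<rho> + fv E \<rho> s S u v \<le> bcast E \<rho> s S u"
proof -
  have "real (Suc 0) * \<rho> + fv E \<rho> s S u v \<le> bcast E \<rho> s S u"
    by (rule bcast_pigeon[OF assms(1-5), of "{v}"]) (use v in auto)
  then show ?thesis by simp
qed

lemma fv_nonneg:
  assumes "finite S" "\<forall>e\<in>E. 0 \<le> s e" "0 \<le> \<rho>" "v \<in> nbrs E S u"
  shows "0 \<le> fv E \<rho> s S u v"
proof -
  have "{u,v} \<in> E" using assms(4) by (simp add: nbrs_def)
  then have "0 \<le> s {u,v}" using assms(2) by blast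
  moreover have "0 \<le> bcast E \<rho> s (comp E S u v) v" by (rule bcast_nonneg[OF assms(2,3) cp_finite[OF assms(1)]])
  ultimately show ?thesis unfolding fv_def by simp
qed



lemma tree_edge:
  assumes "is_tree V E" "{p,q} \<in> E"
  shows "p \<in> V" "q \<in> V" "p \<noteq> q"
proof -
  obtain a b where ab: "a \<in> V" "b \<in> V" "a \<noteq> b" "{p,q} = {a,b}"
    using assms unfolding is_tree_def by blast
  then show "p \<in> V" "q \<in> V" "p \<noteq> q" by (auto simp: doubleton_eq_iff)
qed

lemma tree_noloop: "is_tree V E \<Longrightarrow> \<forall>a. {a} \<notin> E"
proof (intro allI notI)
  fix a assume t: "is_tree V E" and e: "{a} \<in> E"
  have "{a,a} \<in> E" using e by simp
  then have "a \<noteq> a" by (rule tree_edge(3)[OF t])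
  then show False by simp
qed

lemma tree_finite: "is_tree V E \<Longrightarrow> finite V"
  unfolding is_tree_def by blast

lemma tree_conn: "is_tree V E \<Longrightarrow> a \<in> V \<Longrightarrow> b \<in> V \<Longrightarrow> (a,b) \<in> (adjrel E V)\<^sup>*"
  unfolding is_tree_def by blast

lemma tree_bridge: "is_tree V E \<Longrightarrow> {a,b} \<in> E \<Longrightarrow> (a,b) \<notin> (adjrel (E - {{a,b}}) V)\<^sup>*"
  unfolding is_tree_def by blast

lemma avoid:
  "(adjrel E (V - {p}))\<^sup>* \<subseteq> (adjrel (E - {{p,q}}) V)\<^sup>*"
proof (rule rtrancl_mono)
  show "adjrel E (V - {p}) \<subseteq> adjrel (E - {{p,q}}) V"
  proof
    fix x assume "x \<in> adjrel E (V - {p})"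
    then obtain a b where x: "x = (a,b)" "a \<in> V" "b \<in> V" "a \<noteq> p" "b \<noteq> p" "{a,b} \<in> E"
      by (auto simp: adjrel_def)
    have "{a,b} \<noteq> {p,q}" using x by (auto simp: doubleton_eq_iff)
    then show "x \<in> adjrel (E - {{p,q}}) V" using x by (simp add: adjrel_def)
  qed
qed

lemma cp_in: "v \<in> S \<Longrightarrow> comp E S u v \<subseteq> S"
  using cp_sub[of E S u v] by auto

lemma cp_notin: "u \<noteq> v \<Longrightarrow> u \<notin> comp E S u v"
  using cp_sub[of E S u v] by auto

lemma cp_step: "z \<in> comp E S u v \<Longrightarrow> (z,z') \<in> adjrel E (S - {u}) \<Longrightarrow> z' \<in> comp E S u v"
  unfolding Defs.comp_def by (simp add: rtrancl_into_rtrancl)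

lemma T1:
  assumes t: "is_tree V E" and e: "{p,q} \<in> E"
  shows "comp E V p q = V - comp E V q p"
proof -
  have pV: "p \<in> V" and qV: "q \<in> V" and pq: "p \<noteq> q" using tree_edge[OF t e] by auto
  have disj: False if z1: "z \<in> comp E V p q" and z2: "z \<in> comp E V q p" for z
  proof -
    have "(q,z) \<in> (adjrel E (V - {p}))\<^sup>*" using z1 by (simp add: Defs.comp_def)
    then have a: "(q,z) \<in> (adjrel (E - {{p,q}}) V)\<^sup>*" using avoid[of E V p q] by (rule subsetD[rotated])
    have "(p,z) \<in> (adjrel E (V - {q}))\<^sup>*" using z2 by (simp add: Defs.comp_def)
    then have "(p,z) \<in> (adjrel (E - {{q,p}}) V)\<^sup>*" using avoid[of E V q p] by (rule subsetD[rotated])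
    then have b: "(p,z) \<in> (adjrel (E - {{p,q}}) V)\<^sup>*" by (simp add: insert_commute)
    have "(z,q) \<in> (adjrel (E - {{p,q}}) V)\<^sup>*" by (rule adjrel_rtrancl_sym[OF a])
    then have "(p,q) \<in> (adjrel (E - {{p,q}}) V)\<^sup>*" by (rule rtrancl_trans[OF b])
    then show False using tree_bridge[OF t e] by simp
  qed
  have cover: "z \<in> comp E V p q \<or> z \<in> comp E V q p" if zV: "z \<in> V" for z
  proof -
    have "(q,z) \<in> (adjrel E V)\<^sup>*" by (rule tree_conn[OF t qV zV])
    then show ?thesis
    proof (induction rule: rtrancl_induct)
      case base then show ?case using cp_self[of q E V p] by simp
    next
      case (step y z)
      have yz: "y \<in> V" "z \<in> V" "{y,z} \<in> E" using step(2) by (auto simp: adjrel_def)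
      show ?case
      proof (cases "z = p")
        case True then show ?thesis using cp_self[of p E V q] by simp
      next
        case zp: False
        show ?thesis
        proof (cases "z = q")
          case True then show ?thesis using cp_self[of q E V p] by simp
        next
          case zq: False
          from step(3) show ?thesis
          proof
            assume y: "y \<in> comp E V p q"
            then have "y \<noteq> p" using cp_notin[OF pq] by auto
            then have "(y,z) \<in> adjrel E (V - {p})" using yz zp by (simp add: adjrel_def)
            then show ?thesis using cp_step[OF y] by simp
          next
            assume y: "y \<in> comp E V q p"
            then have "y \<noteq> q" using cp_notin pq by metis
            then have "(y,z) \<in> adjrel E (V - {q})" using yz zq by (simp add: adjrel_def)
            then show ?thesis using cp_step[OF y] by simp
          qed
        qed
      qed
    qed
  qed
  show ?thesis
  proof
    show "comp E V p q \<subseteq> V - comp E V q p" using disj cp_in[OF qV, of E p] by blast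
    show "V - comp E V q p \<subseteq> comp E V p q" using cover by blast
  qed
qed

lemma T3:
  assumes t: "is_tree V E" and e1: "{y,v} \<in> E" and e2: "{y,w} \<in> E" and vw: "v \<noteq> w"
  shows "w \<notin> comp E V y v"
proof
  assume "w \<in> comp E V y v"
  then have "(v,w) \<in> (adjrel E (V - {y}))\<^sup>*" by (simp add: Defs.comp_def)
  then have a: "(v,w) \<in> (adjrel (E - {{y,v}}) V)\<^sup>*" using avoid[of E V y v] by (rule subsetD[rotated])
  have wV: "w \<in> V" "y \<in> V" "w \<noteq> y" using tree_edge[OF t e2] by auto
  have "{w,y} \<noteq> {y,v}" using vw wV by (auto simp: doubleton_eq_iff)
  moreover have "{w,y} \<in> E" using e2 by (simp add: insert_commute)
  ultimately have "(w,y) \<in> adjrel (E - {{y,v}}) V" using wV by (simp add: adjrel_def)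
  then have "(v,y) \<in> (adjrel (E - {{y,v}}) V)\<^sup>*" by (rule rtrancl_into_rtrancl[OF a])
  then have "(y,v) \<in> (adjrel (E - {{y,v}}) V)\<^sup>*" by (rule adjrel_rtrancl_sym)
  then show False using tree_bridge[OF t e1] by simp
qed

lemma comps_disj:
  assumes "z \<in> comp E S u a" "z \<in> comp E S u b"
  shows "b \<in> comp E S u a"
proof -
  have "comp E S u z = comp E S u a" by (rule cp_same[OF assms(1)])
  moreover have "comp E S u z = comp E S u b" by (rule cp_same[OF assms(2)])
  ultimately show ?thesis using cp_self[of b E S u] by simp
qed

lemma TL:
  assumes t: "is_tree V E" and e1: "{v,v'} \<in> E" and e2: "{w,v} \<in> E" and wv': "w \<noteq> v'"
  shows "comp E (comp E V w v) v v' = comp E V v v'"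
proof (rule cp_restrict)
  have vV: "v \<in> V" "v' \<in> V" using tree_edge[OF t e1] by auto
  show "comp E V w v \<subseteq> V" by (rule cp_in[OF vV(1)])
  have T: "comp E V w v = V - comp E V v w" by (rule T1[OF t e2])
  have e2': "{v,w} \<in> E" using e2 by (simp add: insert_commute)
  show "comp E V v v' \<subseteq> comp E V w v"
  proof
    fix z assume z: "z \<in> comp E V v v'"
    have "z \<in> V" using z cp_in[OF vV(2)] by blast
    moreover have "z \<notin> comp E V v w"
    proof
      assume "z \<in> comp E V v w"
      then have "w \<in> comp E V v v'" by (rule comps_disj[OF z])
      moreover have "w \<notin> comp E V v v'" by (rule T3[OF t e1 e2']) (use wv' in auto)
      ultimately show False by simp
    qed
    ultimately show "z \<in> comp E V w v" using T by simp
  qed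
qed

lemma NB:
  assumes t: "is_tree V E" and e: "{w,v} \<in> E"
  shows "nbrs E (comp E V w v) v = nbrs E V v - {w}"
proof -
  have wV: "w \<in> V" "v \<in> V" "w \<noteq> v" using tree_edge[OF t e] by auto
  show ?thesis
  proof
    show "nbrs E (comp E V w v) v \<subseteq> nbrs E V v - {w}"
    proof
      fix z assume z: "z \<in> nbrs E (comp E V w v) v"
      then have "z \<in> comp E V w v" "{v,z} \<in> E" by (auto simp: nbrs_def)
      moreover then have "z \<in> V" using cp_in[OF wV(2)] by blast
      moreover have "z \<noteq> w" using \<open>z \<in> comp E V w v\<close> cp_notin[OF wV(3)] by auto
      ultimately show "z \<in> nbrs E V v - {w}" by (simp add: nbrs_def)
    qed
    show "nbrs E V v - {w} \<subseteq> nbrs E (comp E V w v) v"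
    proof
      fix z assume z: "z \<in> nbrs E V v - {w}"
      then have zz: "z \<in> V" "{v,z} \<in> E" "z \<noteq> w" by (auto simp: nbrs_def)
      then have "(v,z) \<in> adjrel E (V - {w})" using wV by (simp add: adjrel_def)
      then have "z \<in> comp E V w v" by (rule cp_step[OF cp_self])
      then show "z \<in> nbrs E (comp E V w v) v" using zz by (simp add: nbrs_def)
    qed
  qed
qed



lemma perm_cons:
  assumes "xs \<in> permutations_of_set (N - {q})" "q \<in> N"
  shows "q # xs \<in> permutations_of_set N"
  using assms unfolding permutations_of_set_def by auto

lemma perm_filter:
  assumes "xs \<in> permutations_of_set N"
  shows "filter (\<lambda>z. z \<noteq> p) xs \<in> permutations_of_set (N - {p})"
  using assms unfolding permutations_of_set_def by auto

lemma fv_sub: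
  assumes t: "is_tree V E" and e: "{q,p} \<in> E" and z: "z \<in> nbrs E V p - {q}"
  shows "fv E \<rho> s (comp E V q p) p z = fv E \<rho> s V p z"
proof -
  have "{p,z} \<in> E" "q \<noteq> z" using z by (auto simp: nbrs_def)
  then have "comp E (comp E V q p) p z = comp E V p z" using TL[OF t _ e] by blast
  then show ?thesis unfolding fv_def by simp
qed

lemma UB:
  assumes t: "is_tree V E" and s: "\<forall>e\<in>E. 0 \<le> s e" and r: "0 \<le> \<rho>" and e: "{p,q} \<in> E"
  shows "bcast E \<rho> s V p \<le> max (\<rho> + fv E \<rho> s V p q) (\<rho> + bcast E \<rho> s (comp E V q p) p)"
proof -
  have pV: "p \<in> V" "q \<in> V" "p \<noteq> q" using tree_edge[OF t e] by auto
  have fin: "finite V" by (rule tree_finite[OF t])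
  have nl: "\<forall>a. {a} \<notin> E" by (rule tree_noloop[OF t])
  have e': "{q,p} \<in> E" using e by (simp add: insert_commute)
  have qN: "q \<in> nbrs E V p" using e pV by (simp add: nbrs_def)
  then have ne: "nbrs E V p \<noteq> {}" by auto
  have N': "nbrs E (comp E V q p) p = nbrs E V p - {q}" by (rule NB[OF t e'])
  have fq: "0 \<le> fv E \<rho> s V p q" by (rule fv_nonneg[OF fin s r qN])
  show ?thesis
  proof (cases "nbrs E V p - {q} = {}")
    case True
    then have "nbrs E V p = {q}" using qN by auto
    then have "[q] \<in> permutations_of_set (nbrs E V p)" by simp
    then have "bcast E \<rho> s V p \<le> R \<rho> (fv E \<rho> s V p) [q]" by (rule bcast_upper[OF fin pV(1) nl s r _ ne])
    then show ?thesis using fq by simp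
  next
    case False
    then have ne': "nbrs E (comp E V q p) p \<noteq> {}" using N' by simp
    have pc: "p \<in> comp E V q p" by (rule cp_self)
    obtain xs where xs: "xs \<in> permutations_of_set (nbrs E (comp E V q p) p)"
      "bcast E \<rho> s (comp E V q p) p = R \<rho> (fv E \<rho> s (comp E V q p) p) xs"
      using bcast_attained[OF cp_finite[OF fin] pc nl s r ne'] by blast
    have xs': "xs \<in> permutations_of_set (nbrs E V p - {q})" using xs(1) N' by simp
    have "R \<rho> (fv E \<rho> s (comp E V q p) p) xs = R \<rho> (fv E \<rho> s V p) xs"
    proof (rule R_cong, rule ballI)
      fix z assume "z \<in> set xs"
      then have "z \<in> nbrs E V p - {q}" using xs' by (simp add: permutations_of_set_def)
      then show "fv E \<rho> s (comp E V q p) p z = fv E \<rho> s V p z" by (rule fv_sub[OF t e'])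
    qed
    moreover have "q # xs \<in> permutations_of_set (nbrs E V p)" by (rule perm_cons[OF xs' qN])
    then have "bcast E \<rho> s V p \<le> R \<rho> (fv E \<rho> s V p) (q # xs)" by (rule bcast_upper[OF fin pV(1) nl s r _ ne])
    ultimately show ?thesis using xs(2) by simp
  qed
qed

lemma REM:
  assumes t: "is_tree V E" and s: "\<forall>e\<in>E. 0 \<le> s e" and r: "0 \<le> \<rho>" and e: "{p,q} \<in> E"
  shows "bcast E \<rho> s (comp E V p q) q \<le> bcast E \<rho> s V q"
proof -
  have pV: "p \<in> V" "q \<in> V" "p \<noteq> q" using tree_edge[OF t e] by auto
  have fin: "finite V" by (rule tree_finite[OF t])
  have nl: "\<forall>a. {a} \<notin> E" by (rule tree_noloop[OF t])
  have e': "{q,p} \<in> E" using e by (simp add: insert_commute)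
  have pN: "p \<in> nbrs E V q" using e' pV by (simp add: nbrs_def)
  then have ne: "nbrs E V q \<noteq> {}" by auto
  have N': "nbrs E (comp E V p q) q = nbrs E V q - {p}" by (rule NB[OF t e])
  have qc: "q \<in> comp E V p q" by (rule cp_self)
  have nn: "0 \<le> bcast E \<rho> s V q" by (rule bcast_nonneg[OF s r fin])
  show ?thesis
  proof (cases "nbrs E V q - {p} = {}")
    case True
    then have "bcast E \<rho> s (comp E V p q) q = 0"
      using bcast_eq[OF cp_finite[OF fin] qc nl s r] N' by simp
    then show ?thesis using nn by simp
  next
    case False
    then have ne': "nbrs E (comp E V p q) q \<noteq> {}" using N' by simp
    obtain xs where xs: "xs \<in> permutations_of_set (nbrs E V q)"
      "bcast E \<rho> s V q = R \<rho> (fv E \<rho> s V q) xs"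
      using bcast_attained[OF fin pV(2) nl s r ne] by blast
    have fx: "filter (\<lambda>z. z \<noteq> p) xs \<in> permutations_of_set (nbrs E (comp E V p q) q)"
      using perm_filter[OF xs(1), of p] N' by simp
    have "bcast E \<rho> s (comp E V p q) q \<le> R \<rho> (fv E \<rho> s (comp E V p q) q) (filter (\<lambda>z. z \<noteq> p) xs)"
      by (rule bcast_upper[OF cp_finite[OF fin] qc nl s r fx ne'])
    also have "\<dots> = R \<rho> (fv E \<rho> s V q) (filter (\<lambda>z. z \<noteq> p) xs)"
    proof (rule R_cong, rule ballI)
      fix z assume "z \<in> set (filter (\<lambda>z. z \<noteq> p) xs)"
      then have "z \<in> nbrs E V q - {p}" using xs(1) by (simp add: permutations_of_set_def)
      then show "fv E \<rho> s (comp E V p q) q z = fv E \<rho> s V q z" by (rule fv_sub[OF t e])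
    qed
    also have "\<dots> \<le> R \<rho> (fv E \<rho> s V q) xs" by (rule R_filter[OF r])
    finally show ?thesis using xs(2) by simp
  qed
qed

lemma CHAIN:
  assumes t: "is_tree V E" and s: "\<forall>e\<in>E. 0 \<le> s e" and r: "0 \<le> \<rho>" and e: "{p,q} \<in> E"
  shows "bcast E \<rho> s V p \<le> \<rho> + s {p,q} + bcast E \<rho> s V q"
proof -
  have pV: "p \<in> V" "q \<in> V" "p \<noteq> q" using tree_edge[OF t e] by auto
  have fin: "finite V" by (rule tree_finite[OF t])
  have nl: "\<forall>a. {a} \<notin> E" by (rule tree_noloop[OF t])
  have e': "{q,p} \<in> E" using e by (simp add: insert_commute)
  have pN: "p \<in> nbrs E V q" using e' pV by (simp add: nbrs_def)
  have se: "0 \<le> s {p,q}" using s e by blast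
  have 1: "bcast E \<rho> s (comp E V p q) q \<le> bcast E \<rho> s V q" by (rule REM[OF t s r e])
  have 2: "\<rho> + fv E \<rho> s V q p \<le> bcast E \<rho> s V q" by (rule bcast_G1[OF fin pV(2) nl s r pN])
  have 3: "0 \<le> s {q,p}" using s e' by blast
  have 4: "bcast E \<rho> s V p \<le> max (\<rho> + fv E \<rho> s V p q) (\<rho> + bcast E \<rho> s (comp E V q p) p)"
    by (rule UB[OF t s r e])
  show ?thesis using 1 2 3 4 se r unfolding fv_def by (simp add: max_def split: if_splits)
qed



lemma path_rev:
  assumes "is_path E p a b"
  shows "is_path E (rev p) b a"
proof -
  have p: "p \<noteq> []" "hd p = a" "last p = b" "distinct p" "\<forall>i. Suc i < length p \<longrightarrow> {p!i, p!Suc i} \<in> E"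
    using assms unfolding is_path_def by auto
  have "\<forall>i. Suc i < length (rev p) \<longrightarrow> {rev p!i, rev p!Suc i} \<in> E"
  proof (intro allI impI)
    fix i assume i: "Suc i < length (rev p)"
    define k where "k = length p - Suc (Suc i)"
    have k: "Suc k < length p" "rev p ! i = p ! Suc k" "rev p ! Suc i = p ! k"
      using i by (auto simp: k_def rev_nth Suc_diff_Suc)
    have "{p!k, p!Suc k} \<in> E" using p(5) k(1) by blast
    then show "{rev p!i, rev p!Suc i} \<in> E" using k by (simp add: insert_commute)
  qed
  then show ?thesis using p unfolding is_path_def by (simp add: hd_rev last_rev)
qed

lemma pe_sym:
  assumes "e \<in> path_edges E a b"
  shows "e \<in> path_edges E b a"
proof -
  obtain p i where pi: "e = {p!i, p!Suc i}" "is_path E p a b" "Suc i < length p"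
    using assms unfolding path_edges_def by blast
  define k where "k = length p - Suc (Suc i)"
  have k: "Suc k < length (rev p)" "rev p ! k = p ! Suc i" "rev p ! Suc k = p ! i"
    using pi(3) by (auto simp: k_def rev_nth Suc_diff_Suc)
  have "e = {rev p!k, rev p!Suc k}" using pi(1) k by (simp add: insert_commute)
  then show ?thesis using path_rev[OF pi(2)] k(1) unfolding path_edges_def by blast
qed

lemma pe_mem:
  assumes "is_path E p a b" "Suc j < length p"
  shows "{p!j, p!Suc j} \<in> path_edges E a b"
  using assms unfolding path_edges_def by blast

lemma GH:
  assumes t: "is_tree V E" and e: "{v,v'} \<in> E"
    and G: "G = V \<or> (\<exists>w. {w,v} \<in> E \<and> w \<noteq> v' \<and> G = comp E V w v)"
  shows "v' \<in> nbrs E G v" "v \<in> G" "comp E G v v' = comp E V v v'" "finite G"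
proof -
  have vV: "v \<in> V" "v' \<in> V" "v \<noteq> v'" using tree_edge[OF t e] by auto
  have fin: "finite V" by (rule tree_finite[OF t])
  have "v' \<in> nbrs E G v \<and> v \<in> G \<and> comp E G v v' = comp E V v v' \<and> finite G"
  proof (cases "G = V")
    case True then show ?thesis using vV e fin by (simp add: nbrs_def)
  next
    case False
    then obtain w where w: "{w,v} \<in> E" "w \<noteq> v'" "G = comp E V w v" using G by blast
    have wV: "w \<in> V" "w \<noteq> v" using tree_edge[OF t w(1)] by auto
    have "v' \<in> nbrs E V v - {w}" using vV e w(2) by (simp add: nbrs_def)
    then have 1: "v' \<in> nbrs E G v" using NB[OF t w(1)] w(3) by simp
    have 2: "v \<in> G" using w(3) cp_self by simp
    have 3: "comp E G v v' = comp E V v v'" using TL[OF t e w(1) w(2)] w(3) by simp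
    have 4: "finite G" using w(3) cp_finite[OF fin] by simp
    show ?thesis using 1 2 3 4 by blast
  qed
  then show "v' \<in> nbrs E G v" "v \<in> G" "comp E G v v' = comp E V v v'" "finite G" by auto
qed



theorem fact3:
  fixes V :: "'a set" and E :: "'a set set" and \<rho> :: real
    and wl wu s :: "'a set \<Rightarrow> real" and x y \<mu> :: 'a
    and h :: nat and u :: "nat \<Rightarrow> 'a" and a :: "nat \<Rightarrow> real" and \<tau>0 :: nat
  assumes tree: "is_tree V E"
    and rho: "\<rho> > 0"
    and intervals: "\<forall>e\<in>E. 0 \<le> wl e \<and> wl e \<le> wu e"
    and x: "x \<in> V"
    and wc: "worst_case E \<rho> V wl wu s x"
    and y: "y \<in> V" "y \<noteq> x"
    and prime: "prime_bc E \<rho> V s y"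
    and agree: "\<forall>e \<in> path_edges E x y \<union> edges_of E (Tsub E V y x). s e = alpha E V wl wu x y e"
    and mu: "\<mu> \<in> nbrs E V y" "{y, \<mu>} \<in> path_edges E y x"
    and h: "h \<ge> 1"
    and u: "bij_betw u {1..h} (nbrs E (Tbar E V y x) y)"
    and a_def: "\<forall>k\<in>{1..h}. a k = s {y, u k} + bcast E \<rho> s (Tbar E V (u k) y) (u k)"
    and a_sorted: "\<forall>i j. 1 \<le> i \<longrightarrow> i \<le> j \<longrightarrow> j \<le> h \<longrightarrow> a j \<le> a i"
    and tau: "\<tau>0 \<in> {1..h}"
      "\<forall>k\<in>{1..h}. real k * \<rho> + a k \<le> real \<tau>0 * \<rho> + a \<tau>0"
      "\<forall>k\<in>{1..h}. k < \<tau>0 \<longrightarrow> real k * \<rho> + a k < real \<tau>0 * \<rho> + a \<tau>0"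
    and cond: "s {y, \<mu>} + bcast E \<rho> s (Tsub E V y x) \<mu> \<ge> a \<tau>0"
  shows "worst_case E \<rho> V wl wu (alpha E V wl wu x y) x"
proof -
  define \<alpha> where "\<alpha> = alpha E V wl wu x y"
  have fin: "finite V" by (rule tree_finite[OF tree])
  have nl: "\<forall>a. {a} \<notin> E" by (rule tree_noloop[OF tree])
  have r: "0 \<le> \<rho>" using rho by simp
  have scen_s: "scenario E wl wu s" using wc unfolding worst_case_def by blast
  have s_nn: "\<forall>e\<in>E. 0 \<le> s e" using scen_s intervals unfolding scenario_def by force
  have scen_a: "scenario E wl wu \<alpha>" using intervals unfolding scenario_def \<alpha>_def alpha_def by auto
  have a_nn: "\<forall>e\<in>E. 0 \<le> \<alpha> e" using scen_a intervals unfolding scenario_def by force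
  have agree': "\<And>e. e \<in> path_edges E x y \<Longrightarrow> \<alpha> e = s e" using agree \<alpha>_def by simp
  have agree2: "\<forall>e\<in>edges_of E (Tsub E V y x). s e = \<alpha> e" using agree \<alpha>_def by simp
  obtain p i where pi: "{y,\<mu>} = {p!i, p!Suc i}" "is_path E p y x" "Suc i < length p"
    using mu(2) unfolding path_edges_def by blast
  have pp: "p \<noteq> []" "hd p = y" "last p = x" "distinct p" "\<forall>i. Suc i < length p \<longrightarrow> {p!i, p!Suc i} \<in> E"
    using pi(2) unfolding is_path_def by auto
  define L where "L = length p"
  have p0: "p!0 = y" using pp by (simp add: hd_conv_nth)
  have pL: "p!(L-1) = x" using pp by (simp add: L_def last_conv_nth)
  have i0: "i = 0 \<and> \<mu> = p!1"
  proof -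
    have "(y = p!i \<and> \<mu> = p!Suc i) \<or> (y = p!Suc i \<and> \<mu> = p!i)" using pi(1) by (auto simp: doubleton_eq_iff)
    then show ?thesis
    proof
      assume A: "y = p!i \<and> \<mu> = p!Suc i"
      then have "p!i = p!0" using p0 by simp
      then have "i = 0" using pp(4) pi(3) nth_eq_iff_index_eq by (metis length_greater_0_conv pp(1) Suc_lessD)
      then show ?thesis using A by simp
    next
      assume A: "y = p!Suc i \<and> \<mu> = p!i"
      then have "p!Suc i = p!0" using p0 by simp
      then have "Suc i = 0" using pp(4) pi(3) nth_eq_iff_index_eq by (metis length_greater_0_conv pp(1))
      then show ?thesis by simp
    qed
  qed
  have L2: "2 \<le> L" using pi(3) L_def by simp
  have pE: "\<And>j. Suc j < L \<Longrightarrow> {p!j, p!Suc j} \<in> E" using pp(5) unfolding L_def by simp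
  have pxy: "{p!j, p!Suc j} \<in> path_edges E x y" if "Suc j < L" for j
    by (rule pe_sym[OF pe_mem[OF pi(2)]]) (use that in \<open>simp add: L_def\<close>)
  have pS: "\<alpha> {p!j, p!Suc j} = s {p!j, p!Suc j}" if "Suc j < L" for j
    by (rule agree'[OF pxy[OF that]])
  have mu1: "\<mu> = p!1" using i0 by simp
  have eym: "{y,\<mu>} \<in> E" using mu(1) by (simp add: nbrs_def)
  have emy: "{\<mu>,y} \<in> E" using eym by (simp add: insert_commute)
  have muV: "\<mu> \<in> V" "\<mu> \<noteq> y" using tree_edge[OF tree eym] by auto
  define TS where "TS = comp E V y \<mu>"
  define TB where "TB = comp E V \<mu> y"
  have pny: "p!k \<noteq> y" if "0 < k" "k < L" for k
  proof
    assume "p!k = y"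
    then have "p!k = p!0" using p0 by simp
    moreover have "k < length p" "0 < length p" using that L_def by auto
    ultimately have "k = 0" using nth_eq_iff_index_eq[OF pp(4)] by blast
    then show False using that by simp
  qed
  have pV: "p!k \<in> V" if "Suc k < L" for k using tree_edge(1)[OF tree pE[OF that]] .
  have walk: "1 \<le> j \<longrightarrow> j < L \<longrightarrow> p!j \<in> TS" for j
  proof (induction j)
    case 0 then show ?case by simp
  next
    case (Suc j)
    show ?case
    proof (cases "j = 0")
      case True then show ?thesis using mu1 TS_def cp_self[of \<mu> E V y] by simp
    next
      case False
      show ?thesis
      proof (intro impI)
        assume "Suc j < L"
        then have inTS: "p!j \<in> TS" using Suc.IH False by simp
        have e: "{p!j, p!Suc j} \<in> E" using pE \<open>Suc j < L\<close> by simp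
        have "p!j \<in> V" "p!Suc j \<in> V" using tree_edge[OF tree e] by auto
        moreover have "p!j \<noteq> y" "p!Suc j \<noteq> y" using pny False \<open>Suc j < L\<close> by auto
        ultimately have "(p!j, p!Suc j) \<in> adjrel E (V - {y})" using e by (simp add: adjrel_def)
        then show "p!Suc j \<in> TS" using cp_step inTS TS_def by metis
      qed
    qed
  qed
  have xTS: "x \<in> TS" using walk[of "L-1"] pL L2 by simp
  have TSx: "Tsub E V y x = TS" unfolding Tsub_def TS_def using cp_same xTS TS_def by metis
  have TBx: "Tbar E V y x = TB" unfolding Tbar_def TSx TB_def TS_def using T1[OF tree emy] by simp
  have yTB: "y \<in> TB" unfolding TB_def by (rule cp_self)
  have muTS: "\<mu> \<in> TS" unfolding TS_def by (rule cp_self)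
  have finTB: "finite TB" unfolding TB_def by (rule cp_finite[OF fin])
  have finTS: "finite TS" unfolding TS_def by (rule cp_finite[OF fin])
  have NTB: "nbrs E TB y = nbrs E V y - {\<mu>}" unfolding TB_def by (rule NB[OF tree emy])
  have uimg: "u ` {1..h} = nbrs E V y - {\<mu>}"
    using bij_betw_imp_surj_on[OF u] TBx NTB by simp
  have uinj: "inj_on u {1..h}" by (rule bij_betw_imp_inj_on[OF u])
  have uE: "{y, u k} \<in> E" "u k \<noteq> \<mu>" if "k \<in> {1..h}" for k
  proof -
    have "u k \<in> nbrs E V y - {\<mu>}" using uimg that by blast
    then show "{y, u k} \<in> E" "u k \<noteq> \<mu>" by (auto simp: nbrs_def)
  qed
  have akV: "a k = fv E \<rho> s V y (u k)" if k: "k \<in> {1..h}" for k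
  proof -
    have "Tbar E V (u k) y = comp E V y (u k)" unfolding Tbar_def Tsub_def using T1[OF tree uE(1)[OF k]] by simp
    then show ?thesis using a_def k unfolding fv_def by simp
  qed
  have akB: "a k = fv E \<rho> s TB y (u k)" if k: "k \<in> {1..h}" for k
  proof -
    have "comp E TB y (u k) = comp E V y (u k)" unfolding TB_def
      by (rule TL[OF tree uE(1)[OF k] emy]) (use uE(2)[OF k] in auto)
    then show ?thesis using akV[OF k] unfolding fv_def by simp
  qed
  define c where "c = s {y, \<mu>} + bcast E \<rho> s TS \<mu>"
  have cfv: "fv E \<rho> s V y \<mu> = c" unfolding fv_def c_def TS_def by simp
  have cge: "a \<tau>0 \<le> c" using cond TSx c_def by simp
  define Bs where "Bs = bcast E \<rho> s TB y"
  define Ba where "Ba = bcast E \<rho> \<alpha> TB y"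
  define Bt where "Bt = real \<tau>0 * \<rho> + a \<tau>0"
  have step1: "Bs \<le> Bt"
  proof -
    define xs where "xs = map u [1..<Suc h]"
    have sx: "set xs = u ` {1..h}" unfolding xs_def by (simp only: set_map set_upt atLeastLessThanSuc_atLeastAtMost)
    have dx: "distinct xs" unfolding xs_def distinct_map set_upt atLeastLessThanSuc_atLeastAtMost using uinj by simp
    have xsP: "xs \<in> permutations_of_set (nbrs E TB y)" using sx dx uimg NTB by (simp add: permutations_of_set_def)
    have "(1::nat) \<in> {1..h}" using h by simp
    then have "u 1 \<in> u ` {1..h}" by (rule imageI)
    then have "u 1 \<in> nbrs E TB y" using uimg NTB by simp
    then have ne: "nbrs E TB y \<noteq> {}" by auto
    have "Bs \<le> R \<rho> (fv E \<rho> s TB y) xs" unfolding Bs_def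
      by (rule bcast_upper[OF finTB yTB nl s_nn r xsP ne])
    also have "\<dots> \<le> Bt"
    proof (rule R_le[OF r])
      show "xs \<noteq> []" using h xs_def by (simp del: upt_Suc)
      show "\<forall>i<length xs. real (Suc i) * \<rho> + fv E \<rho> s TB y (xs ! i) \<le> Bt"
      proof (intro allI impI)
        fix i assume "i < length xs"
        then have i: "i < h" "xs ! i = u (Suc i)" "Suc i \<in> {1..h}" unfolding xs_def by (auto simp del: upt_Suc)
        then show "real (Suc i) * \<rho> + fv E \<rho> s TB y (xs ! i) \<le> Bt"
        proof -
          have "real (Suc i) * \<rho> + a (Suc i) \<le> real \<tau>0 * \<rho> + a \<tau>0" using tau(2) i(3) by blast
          then show ?thesis using akB[OF i(3)] Bt_def i(2) by simp
        qed
      qed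
      show "\<forall>z\<in>set xs. 0 \<le> fv E \<rho> s TB y z"
      proof
        fix z assume "z \<in> set xs"
        then have "z \<in> nbrs E TB y" using xsP by (simp add: permutations_of_set_def)
        then show "0 \<le> fv E \<rho> s TB y z" by (rule fv_nonneg[OF finTB s_nn r])
      qed
    qed
    finally show ?thesis .
  qed
  have muN: "\<mu> \<in> nbrs E V y" by (rule mu(1))
  have step2a: "\<rho> + c \<le> bcast E \<rho> s V y"
    using bcast_G1[OF fin y(1) nl s_nn r muN] cfv by simp
  have step2b: "real (Suc \<tau>0) * \<rho> + a \<tau>0 \<le> bcast E \<rho> s V y"
  proof (rule bcast_pigeon[OF fin y(1) nl s_nn r])
    let ?W = "insert \<mu> (u ` {1..\<tau>0})"
    have sub: "{1..\<tau>0} \<subseteq> {1..h}" using tau(1) by auto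
    have "u ` {1..\<tau>0} \<subseteq> nbrs E V y - {\<mu>}" using uimg sub by blast
    then show "?W \<subseteq> nbrs E V y" using muN by blast
    have "\<mu> \<notin> u ` {1..\<tau>0}" using \<open>u ` {1..\<tau>0} \<subseteq> nbrs E V y - {\<mu>}\<close> by blast
    moreover have "card (u ` {1..\<tau>0}) = \<tau>0" using card_image[OF inj_on_subset[OF uinj sub]] by simp
    ultimately show "card ?W = Suc \<tau>0" by simp
    show "\<forall>w\<in>?W. a \<tau>0 \<le> fv E \<rho> s V y w"
    proof
      fix w assume "w \<in> ?W"
      then show "a \<tau>0 \<le> fv E \<rho> s V y w"
      proof
        assume "w = \<mu>" then show ?thesis using cfv cge by simp
      next
        assume "w \<in> u ` {1..\<tau>0}"
        then obtain k where k: "k \<in> {1..\<tau>0}" "w = u k" by blast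
        then have "k \<in> {1..h}" using sub by blast
        moreover have "a \<tau>0 \<le> a k" using a_sorted k(1) tau(1) by auto
        ultimately show ?thesis using akV k(2) by simp
      qed
    qed
  qed
  have eqmu: "\<alpha> {y,\<mu>} = s {y,\<mu>}" by (rule agree'[OF pe_sym[OF mu(2)]])
  have eqTS: "bcast E \<rho> \<alpha> TS \<mu> = bcast E \<rho> s TS \<mu>"
    unfolding bcast_def by (rule bc_local[OF _ muTS]) (use agree2 TSx in auto)
  have step3: "bcast E \<rho> \<alpha> V y \<le> max (\<rho> + c) (\<rho> + Ba)"
  proof -
    have "bcast E \<rho> \<alpha> V y \<le> max (\<rho> + fv E \<rho> \<alpha> V y \<mu>) (\<rho> + bcast E \<rho> \<alpha> (comp E V \<mu> y) y)"
      by (rule UB[OF tree a_nn r eym])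
    moreover have "fv E \<rho> \<alpha> V y \<mu> = c" unfolding fv_def c_def using eqmu eqTS TS_def by simp
    ultimately show ?thesis unfolding Ba_def TB_def by simp
  qed
  have le_sa: "\<forall>e\<in>E. s e \<le> \<alpha> e"
  proof
    fix e assume eE: "e \<in> E"
    show "s e \<le> \<alpha> e"
    proof (cases "e \<in> path_edges E x y \<union> edges_of E (Tbar E V y x)")
      case True
      then have "\<alpha> e = wu e" unfolding \<alpha>_def alpha_def by simp
      then show ?thesis using scen_s eE unfolding scenario_def by simp
    next
      case False
      obtain a1 b1 where ab: "a1 \<in> V" "b1 \<in> V" "a1 \<noteq> b1" "e = {a1,b1}"
        using tree eE unfolding is_tree_def by blast
      have notpath: "e \<notin> path_edges E x y" using False by simp
      have notB: "\<not> e \<subseteq> V - TS" using False eE TBx unfolding edges_of_def TB_def TS_def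
        using T1[OF tree emy] by auto
      have yTS: "y \<notin> TS" unfolding TS_def using cp_notin muV(2) by metis
      have key: "b \<in> TS" if aa: "a \<in> TS" "b \<in> V" "{a,b} = e" for a b
      proof (rule ccontr)
        assume bn: "b \<notin> TS"
        show False
        proof (cases "b = y")
          case True
          have "a = \<mu>"
          proof (rule ccontr)
            assume "a \<noteq> \<mu>"
            moreover have "{y,a} \<in> E" using aa eE True by (simp add: insert_commute)
            ultimately have "a \<notin> comp E V y \<mu>" using T3[OF tree eym] by metis
            then show False using aa TS_def by simp
          qed
          then have "e = {y,\<mu>}" using aa True by (simp add: insert_commute)
          then show False using notpath pe_sym[OF mu(2)] by simp
        next
          case False
          have "a \<noteq> y" using aa yTS by auto
          moreover have "a \<in> V" using aa cp_in[OF muV(1), of E y] TS_def by auto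
          ultimately have "(a,b) \<in> adjrel E (V - {y})" using aa eE False by (simp add: adjrel_def)
          then have "b \<in> TS" using cp_step aa(1) TS_def by metis
          then show False using bn by simp
        qed
      qed
      have "e \<subseteq> TS"
      proof (cases "a1 \<in> TS")
        case True
        then have "b1 \<in> TS" using key[of a1 b1] ab by simp
        then show ?thesis using True ab by simp
      next
        case False
        then have "b1 \<in> TS" using notB ab by auto
        then have "a1 \<in> TS" using key[of b1 a1] ab by (simp add: insert_commute)
        then show ?thesis using False by simp
      qed
      then have "e \<in> edges_of E (Tsub E V y x)" using eE TSx by (simp add: edges_of_def)
      then show ?thesis using agree2 by simp
    qed
  qed
  have step4: "bcast E \<rho> s V x \<le> bcast E \<rho> \<alpha> V x" unfolding bcast_def by (rule bc_mono[OF le_sa fin])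
  have pdist: "p!j \<noteq> p!k" if "j < L" "k < L" "j \<noteq> k" for j k
    using nth_eq_iff_index_eq[OF pp(4)] that L_def by simp
  define G where "G = (\<lambda>j. if Suc j < L then comp E V (p!Suc j) (p!j) else V)"
  have Gcond: "G j = V \<or> (\<exists>w. {w, p!j} \<in> E \<and> w \<noteq> p!(j-1) \<and> G j = comp E V w (p!j))"
    if j: "1 \<le> j" "j < L" for j
  proof (cases "Suc j < L")
    case True
    have "{p!j, p!Suc j} \<in> E" by (rule pE[OF True])
    then have "{p!Suc j, p!j} \<in> E" by (simp add: insert_commute)
    moreover have "p!Suc j \<noteq> p!(j-1)" using pdist True j by simp
    ultimately show ?thesis using True G_def by auto
  next
    case False then show ?thesis using G_def by simp
  qed
  have chain: "1 \<le> j \<longrightarrow> j < L \<longrightarrow> bcast E \<rho> s V (p!j) - max Bs c \<le> bcast E \<rho> \<alpha> (G j) (p!j) - Ba" for j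
  proof (induction j)
    case 0 then show ?case by simp
  next
    case (Suc j)
    show ?case
    proof (intro impI)
      assume j: "1 \<le> Suc j" "Suc j < L"
      have e: "{p!Suc j, p!j} \<in> E" using pE[OF j(2)] by (simp add: insert_commute)
      have gc: "G (Suc j) = V \<or> (\<exists>w. {w, p!Suc j} \<in> E \<and> w \<noteq> p!j \<and> G (Suc j) = comp E V w (p!Suc j))"
        using Gcond[OF j] by simp
      note gh = GH[OF tree e gc]
      have sj: "\<alpha> {p!Suc j, p!j} = s {p!Suc j, p!j}" using pS[OF j(2)] by (simp add: insert_commute)
      have A: "\<rho> + fv E \<rho> \<alpha> (G (Suc j)) (p!Suc j) (p!j) \<le> bcast E \<rho> \<alpha> (G (Suc j)) (p!Suc j)"
        by (rule bcast_G1[OF gh(4) gh(2) nl a_nn r gh(1)])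
      show "bcast E \<rho> s V (p!Suc j) - max Bs c \<le> bcast E \<rho> \<alpha> (G (Suc j)) (p!Suc j) - Ba"
      proof (cases "j = 0")
        case True
        then have pm: "p!Suc j = \<mu>" "p!j = y" using mu1 p0 by auto
        have cG: "comp E (G (Suc j)) (p!Suc j) (p!j) = TB" using gh(3) pm TB_def by simp
        have B: "bcast E \<rho> s V \<mu> \<le> max (\<rho> + fv E \<rho> s V \<mu> y) (\<rho> + bcast E \<rho> s (comp E V y \<mu>) \<mu>)"
          by (rule UB[OF tree s_nn r emy])
        have f1: "fv E \<rho> s V \<mu> y = s {\<mu>,y} + Bs" unfolding fv_def Bs_def TB_def by simp
        have f2: "fv E \<rho> \<alpha> (G (Suc j)) (p!Suc j) (p!j) = s {\<mu>,y} + Ba"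
          unfolding fv_def Ba_def using cG sj pm by simp
        have sn: "0 \<le> s {\<mu>,y}" using s_nn emy by blast
        have cc: "c = s {\<mu>,y} + bcast E \<rho> s (comp E V y \<mu>) \<mu>" unfolding c_def TS_def by (simp add: insert_commute)
        show ?thesis using A B f1 f2 sn cc pm by (simp add: max_def split: if_splits)
      next
        case False
        then have IH: "bcast E \<rho> s V (p!j) - max Bs c \<le> bcast E \<rho> \<alpha> (G j) (p!j) - Ba"
          using Suc.IH j by simp
        have cG: "comp E (G (Suc j)) (p!Suc j) (p!j) = G j" using gh(3) j(2) G_def by simp
        have B: "bcast E \<rho> s V (p!Suc j) \<le> \<rho> + s {p!Suc j, p!j} + bcast E \<rho> s V (p!j)"
          by (rule CHAIN[OF tree s_nn r e])
        have f2: "fv E \<rho> \<alpha> (G (Suc j)) (p!Suc j) (p!j) = s {p!Suc j, p!j} + bcast E \<rho> \<alpha> (G j) (p!j)"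
          unfolding fv_def using cG sj by simp
        show ?thesis using A B f2 IH by simp
      qed
    qed
  qed
  have step5: "bcast E \<rho> s V x - max Bs c \<le> bcast E \<rho> \<alpha> V x - Ba"
  proof -
    have "G (L-1) = V" using G_def L2 by simp
    then show ?thesis using chain[of "L-1"] L2 pL by simp
  qed
  have step6: "regret E \<rho> V s x y \<le> regret E \<rho> V \<alpha> x y"
  proof -
    have Bt': "real (Suc \<tau>0) * \<rho> + a \<tau>0 = \<rho> + Bt" unfolding Bt_def by (simp add: algebra_simps)
    have "bcast E \<rho> \<alpha> V y - bcast E \<rho> s V y \<le> bcast E \<rho> \<alpha> V x - bcast E \<rho> s V x"
      using step1 step2a step2b Bt' step3 step4 step5 by (simp add: max_def split: if_splits)
    then show ?thesis unfolding regret_def by simp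
  qed
  obtain y0 where y0: "y0 \<in> V" "max_r E \<rho> V wl wu x = regret E \<rho> V s x y0"
    using wc unfolding worst_case_def by blast
  have ymin: "bcast E \<rho> s V y \<le> bcast E \<rho> s V y0"
    using prime y0(1) unfolding prime_bc_def in_B_def by blast
  have r1: "max_r E \<rho> V wl wu x \<le> regret E \<rho> V s x y" using y0 ymin unfolding regret_def by simp
  have bdd: "bdd_above {regret E \<rho> V s' x z | s' z. z \<in> V \<and> scenario E wl wu s'}"
  proof (rule bdd_aboveI)
    fix r0 assume "r0 \<in> {regret E \<rho> V s' x z | s' z. z \<in> V \<and> scenario E wl wu s'}"
    then obtain s' z where sz: "r0 = regret E \<rho> V s' x z" "scenario E wl wu s'" by blast
    have le: "\<forall>e\<in>E. s' e \<le> wu e" and nn: "\<forall>e\<in>E. 0 \<le> s' e"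
      using sz(2) intervals unfolding scenario_def by force+
    have "bcast E \<rho> s' V x \<le> bcast E \<rho> wu V x" unfolding bcast_def by (rule bc_mono[OF le fin])
    moreover have "0 \<le> bcast E \<rho> s' V z" by (rule bcast_nonneg[OF nn r fin])
    ultimately show "r0 \<le> bcast E \<rho> wu V x" using sz(1) unfolding regret_def by simp
  qed
  have r2: "regret E \<rho> V \<alpha> x y \<le> max_r E \<rho> V wl wu x"
    unfolding max_r_def by (rule cSup_upper[OF _ bdd]) (use y(1) scen_a in blast)
  have "max_r E \<rho> V wl wu x = regret E \<rho> V \<alpha> x y" using r1 r2 step6 by simp
  then show ?thesis unfolding worst_case_def using scen_a y(1) \<alpha>_def by blast
qed


end
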